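(* For every integer $n>2$, the number of triples $(x,y,z)\in\{1,\dots,n\}^3$ with $x<y<z$ and $\gcd(y-x,\,z-y,\,n)=1$ equals $\frac{n}{6}J_2(n)-\frac{n}{2}J_1(n)$.
   Context: Jordan's totient function of order $k\ge1$ is $J_k(n)=n^k\prod_{p\mid n,\ p\text{ prime}}\left(1-p^{-k}\right)$; in particular $J_1=\varphi$ is Euler's totient function. *)

theory Defs
  imports "HOL-Number_Theory.Number_Theory"
begin

definition jordan_totient :: "nat \<Rightarrow> nat \<Rightarrow> real" where
  "jordan_totient k n = real n ^ k * (\<Prod>p\<in>prime_factors n. (1 - 1 / real p ^ k))"

end

theory Submission
  imports Defs
begin


lemma J_one [simp]: "jordan_totient k 1 = 1"
  by (simp add: jordan_totient_def)

lemma J_mult: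
  assumes "coprime a b"
  shows "jordan_totient k (a*b) = jordan_totient k a * jordan_totient k b"
proof (cases "a = 0 \<or> b = 0")
  case True
  then show ?thesis using assms by (auto simp: jordan_totient_def)
next
  case False
  have disj: "prime_factors a \<inter> prime_factors b = {}"
  proof (rule ccontr)
    assume "prime_factors a \<inter> prime_factors b \<noteq> {}"
    then obtain x where x: "x \<in> prime_factors a" "x \<in> prime_factors b" by blast
    then have "prime x" "x dvd a" "x dvd b" by auto
    then show False using assms coprime_common_divisor_nat[of a b x] by auto
  qed
  have "prime_factors (a*b) = prime_factors a \<union> prime_factors b"
    using False by (simp add: prime_factors_product)
  then have "(\<Prod>p\<in>prime_factors (a*b). (1 - 1 / real p ^ k)) =
     (\<Prod>p\<in>prime_factors a. (1 - 1 / real p ^ k)) * (\<Prod>p\<in>prime_factors b. (1 - 1 / real p ^ k))"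
    using disj by (simp add: prod.union_disjoint)
  then show ?thesis by (simp add: jordan_totient_def power_mult_distrib)
qed

lemma J_primepow:
  assumes "prime p" "i > 0"
  shows "jordan_totient k (p^i) = real p ^ (i*k) - real p ^ ((i-1)*k)"
proof -
  have pf: "prime_factors (p^i) = {p}"
    using assms by (simp add: prime_factors_power prime_prime_factors)
  have p0: "real p > 0" using assms prime_gt_0_nat by simp
  have e1: "jordan_totient k (p^i) = real p ^ (i*k) * (1 - 1 / real p ^ k)"
    by (simp add: jordan_totient_def pf power_mult[symmetric] mult.commute)
  have h: "real p ^ (i*k) = real p ^ ((i-1)*k) * real p ^ k"
  proof -
    have "i*k = (i-1)*k + k" using assms(2) by (cases i) auto
    then show ?thesis by (simp add: power_add)
  qed
  show ?thesis using p0 unfolding e1 h by (simp add: algebra_simps)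
qed

lemma J_primepow_sum:
  assumes "prime p"
  shows "(\<Sum>i\<le>e. jordan_totient k (p^i)) = real p ^ (e*k)"
proof (induction e)
  case 0 then show ?case by (simp add: jordan_totient_def)
next
  case (Suc e)
  then show ?case using J_primepow[OF assms, of "Suc e" k] by simp
qed

lemma divsum_primepow:
  assumes "prime p"
  shows "(\<Sum>d | d dvd p^e. jordan_totient k d) = real p ^ (e*k)"
proof -
  have "{d. d dvd p^e} = (\<lambda>i. p^i) ` {..e}"
    using divides_primepow_nat[OF assms] by auto
  moreover have "inj_on (\<lambda>i. p^i) {..e}"
    using assms prime_gt_1_nat[OF assms] by (auto simp: inj_on_def)
  ultimately show ?thesis using J_primepow_sum[OF assms] by (simp add: sum.reindex)
qed

lemma gcd_split:
  fixes a b d1 d2 :: nat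
  assumes "coprime a b" "d1 dvd a" "d2 dvd b"
  shows "gcd (d1*d2) a = d1" "gcd (d1*d2) b = d2"
proof -
    have c1: "coprime d2 a" using coprime_divisors[OF dvd_refl assms(3), of a] assms(1) by (simp add: coprime_commute)
    have c2: "coprime d1 b" using coprime_divisors[OF assms(2) dvd_refl, of b] assms(1) by simp
    have c1': "coprime a d2" using c1 by (simp add: coprime_commute)
    have c2': "coprime b d1" using c2 by (simp add: coprime_commute)
    show "gcd (d1*d2) a = d1" using gcd_mult_left_right_cancel[OF c1', of d1] assms(2)
      by (simp add: gcd_nat.absorb1)
    show "gcd (d1*d2) b = d2" using gcd_mult_left_left_cancel[OF c2', of d2] assms(3)
      by (simp add: gcd_nat.absorb1)
qed

lemma divsum_coprime:
  fixes f :: "nat \<Rightarrow> real"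
  assumes "coprime a b" "a > 0" "b > 0"
  shows "(\<Sum>d | d dvd a*b. f d) = (\<Sum>d1 | d1 dvd a. \<Sum>d2 | d2 dvd b. f (d1*d2))"
proof -
  have fa: "finite {d. d dvd a}" "finite {d. d dvd b}" using assms by auto
  have "(\<Sum>d1 | d1 dvd a. \<Sum>d2 | d2 dvd b. f (d1*d2)) =
        (\<Sum>(d1,d2) \<in> {d. d dvd a} \<times> {d. d dvd b}. f (d1*d2))"
    using fa by (simp add: sum.cartesian_product)
  also have "\<dots> = (\<Sum>d | d dvd a*b. f d)"
  proof (rule sum.reindex_bij_witness[of _ "\<lambda>d. (gcd d a, gcd d b)" "\<lambda>(d1,d2). d1*d2"])
    fix x assume "x \<in> {d. d dvd a} \<times> {d. d dvd b}"
    then obtain d1 d2 where x: "x = (d1,d2)" "d1 dvd a" "d2 dvd b" by auto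
    show "(\<lambda>d. (gcd d a, gcd d b)) ((\<lambda>(d1,d2). d1*d2) x) = x" using x gcd_split[OF assms(1) x(2,3)] by simp
    show "(\<lambda>(d1,d2). d1*d2) x \<in> {d. d dvd a*b}" using x by (simp add: mult_dvd_mono)
    show "f ((\<lambda>(d1,d2). d1*d2) x) = (case x of (d1,d2) \<Rightarrow> f (d1*d2))" using x by simp
  next
    fix d assume d: "d \<in> {d. d dvd a*b}"
    show "(\<lambda>d. (gcd d a, gcd d b)) d \<in> {d. d dvd a} \<times> {d. d dvd b}" by simp
    show "(\<lambda>(d1,d2). d1*d2) ((\<lambda>d. (gcd d a, gcd d b)) d) = d"
    proof -
      obtain d1 d2 where "d = d1*d2" "d1 dvd a" "d2 dvd b" using division_decomp[of d a b] d by auto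
      then show ?thesis using gcd_split[OF assms(1)] by simp
    qed
  qed
  finally show ?thesis ..
qed

lemma J_divsum:
  "n > 0 \<Longrightarrow> (\<Sum>d | d dvd n. jordan_totient k d) = real n ^ k"
proof (induction n rule: less_induct)
  case (less n)
  show ?case
  proof (cases "n = 1")
    case True then show ?thesis by (simp add: jordan_totient_def)
  next
    case False
    obtain p where p: "prime p" "p dvd n" using prime_factor_nat[OF False] by auto
    define e where "e = multiplicity p n"
    obtain m where nm: "n = p^e * m" "\<not> p dvd m" by (rule multiplicity_decompose'[of n p, folded e_def]) (use less.prems p in \<open>auto simp: not_prime_unit\<close>)
    have "e > 0" using p less.prems e_def by (simp add: prime_multiplicity_gt_zero_iff)
    have m0: "m > 0" using nm less.prems by (cases "m = 0") auto
    have "p^e > 1" by (rule one_less_power[OF prime_gt_1_nat[OF p(1)] \<open>e > 0\<close>])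
    then have "m < n" using nm m0 by simp
    have cop: "coprime (p^e) m" using p nm by (simp add: prime_imp_coprime_nat)
    have pe0: "p^e > 0" using \<open>p^e > 1\<close> by linarith
    have "(\<Sum>d | d dvd n. jordan_totient k d) =
          (\<Sum>d1 | d1 dvd p^e. \<Sum>d2 | d2 dvd m. jordan_totient k (d1*d2))"
      using divsum_coprime[OF cop pe0 m0] nm by simp
    also have "\<dots> = (\<Sum>d1 | d1 dvd p^e. \<Sum>d2 | d2 dvd m. jordan_totient k d1 * jordan_totient k d2)"
    proof (intro sum.cong refl)
      fix d1 d2 assume "d1 \<in> {d. d dvd p^e}" "d2 \<in> {d. d dvd m}"
      then have "coprime d1 d2" using coprime_divisors[OF _ _ cop, of d1 d2] by simp
      then show "jordan_totient k (d1*d2) = jordan_totient k d1 * jordan_totient k d2" by (rule J_mult)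
    qed
    also have "\<dots> = (\<Sum>d1 | d1 dvd p^e. jordan_totient k d1) * (\<Sum>d2 | d2 dvd m. jordan_totient k d2)"
      by (simp add: sum_product)
    also have "\<dots> = real p ^ (e*k) * real m ^ k"
      using divsum_primepow[OF p(1)] less.IH[OF \<open>m < n\<close> m0] by simp
    also have "\<dots> = real n ^ k" using nm by (simp add: power_mult power_mult_distrib)
    finally show ?thesis .
  qed
qed



lemma dirichlet_uniq:
  fixes F G :: "nat \<Rightarrow> real"
  assumes h: "\<And>n. n > 0 \<Longrightarrow> (\<Sum>d | d dvd n. real (n div d) * F d) = (\<Sum>d | d dvd n. real (n div d) * G d)"
  shows "n > 0 \<Longrightarrow> F n = G n"
proof (induction n rule: less_induct)
  case (less n)
  let ?A = "{d. d dvd n}"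
  have fin: "finite ?A" using less.prems by simp
  have nA: "n \<in> ?A" by simp
  have eq: "(\<Sum>d\<in>?A - {n}. real (n div d) * F d) = (\<Sum>d\<in>?A - {n}. real (n div d) * G d)"
  proof (intro sum.cong refl)
    fix d assume "d \<in> ?A - {n}"
    then have "d dvd n" "d \<noteq> n" by auto
    then have "d < n" "d > 0" using less.prems dvd_imp_le by (auto intro: Nat.gr0I) 
    then show "real (n div d) * F d = real (n div d) * G d" using less.IH by simp
  qed
  have "real (n div n) * F n + (\<Sum>d\<in>?A - {n}. real (n div d) * F d) =
        real (n div n) * G n + (\<Sum>d\<in>?A - {n}. real (n div d) * G d)"
    using h[OF less.prems] sum.remove[OF fin nA, of "\<lambda>d. real (n div d) * F d"]
      sum.remove[OF fin nA, of "\<lambda>d. real (n div d) * G d"] by simp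
  then show ?case using eq less.prems by simp
qed

definition Gf :: "nat \<Rightarrow> real" where
  "Gf d = real d / 6 * jordan_totient 2 d - real d / 2 * jordan_totient 1 d + (if d = 1 then 1/3 else 0)"

lemma J1_totient: "jordan_totient 1 n = real (totient n)"
  by (simp add: jordan_totient_def totient_formula2)

lemma Gf_sum:
  assumes "n > 0"
  shows "(\<Sum>d | d dvd n. real (n div d) * Gf d) = real n * (real n - 1) * (real n - 2) / 6"
proof -
  have nd: "real (n div d) * real d = real n" if "d dvd n" for d
  proof -
    have "n div d * d = n" using that by simp
    then show ?thesis by (simp only: of_nat_mult[symmetric])
  qed
  have "(\<Sum>d | d dvd n. real (n div d) * Gf d) =
     (\<Sum>d | d dvd n. real n / 6 * jordan_totient 2 d - real n / 2 * jordan_totient 1 d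
        + (if d = 1 then real n / 3 else 0))"
  proof (intro sum.cong refl)
    fix d assume "d \<in> {d. d dvd n}"
    then have e: "real n = real (n div d) * real d" using nd by simp
    show "real (n div d) * Gf d = real n / 6 * jordan_totient 2 d - real n / 2 * jordan_totient 1 d
        + (if d = 1 then real n / 3 else 0)"
      unfolding Gf_def e by (auto simp: algebra_simps)
  qed
  also have "\<dots> = real n / 6 * (\<Sum>d | d dvd n. jordan_totient 2 d) - real n / 2 * (\<Sum>d | d dvd n. jordan_totient 1 d)
        + (\<Sum>d | d dvd n. (if d = 1 then real n / 3 else 0))"
    by (simp add: sum.distrib sum_subtractf sum_distrib_left)
  also have "(\<Sum>d | d dvd n. (if d = 1 then real n / 3 else 0)) = real n / 3"
    using assms by (simp add: sum.delta)
  also have "(\<Sum>d | d dvd n. jordan_totient 2 d) = real n ^ 2" using J_divsum[OF assms] .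
  also have "(\<Sum>d | d dvd n. jordan_totient 1 d) = real n ^ 1" using J_divsum[OF assms] .
  finally show ?thesis by (simp add: algebra_simps power2_eq_square)
qed



definition Cset :: "nat \<Rightarrow> nat \<Rightarrow> (nat \<times> nat \<times> nat) set" where
  "Cset g n = {(x::nat, y::nat, z::nat).
            x \<in> {1..n} \<and> y \<in> {1..n} \<and> z \<in> {1..n} \<and> x < y \<and> y < z \<and>
            gcd (gcd (y - x) (z - y)) n = g}"

lemma divmod_uniq:
  fixes a a' g r r' :: nat
  assumes "a*g + r = a'*g + r'" "r < g" "r' < g"
  shows "a = a'" "r = r'"
proof -
  have g0: "g > 0" using assms by simp
  have 1: "(a*g + r) div g = a" "(a*g + r) mod g = r" using assms(2,3) g0 by simp_all
  have 2: "(a'*g + r') div g = a'" "(a'*g + r') mod g = r'" using assms(2,3) g0 by simp_all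
  have "a = (a*g + r) div g" using 1 by simp
  also have "\<dots> = (a'*g + r') div g" using assms(1) by (simp only:)
  also have "\<dots> = a'" using 2 by simp
  finally show "a = a'" .
  have "r = (a*g + r) mod g" using 1 by simp
  also have "\<dots> = (a'*g + r') mod g" using assms(1) by (simp only:)
  also have "\<dots> = r'" using 2 by simp
  finally show "r = r'" .
qed

lemma card_Cset:
  assumes "n > 0" "g dvd n"
  shows "card (Cset g n) = g * card (Cset 1 (n div g))"
proof -
  define m where "m = n div g"
  have g0: "g > 0" using assms by (auto intro: Nat.gr0I)
  have nm: "n = m * g" using assms m_def by simp
  have m0: "m > 0" using nm assms by (auto intro: Nat.gr0I)
  define f where "f = (\<lambda>(r::nat,(x::nat,y::nat,z::nat)). ((x-1)*g+r+1, (y-1)*g+r+1, (z-1)*g+r+1))"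
  have inj: "inj_on f ({0..<g} \<times> Cset 1 m)"
  proof (rule inj_onI)
    fix u v
    assume A0: "u \<in> {0..<g} \<times> Cset 1 m" and B0: "v \<in> {0..<g} \<times> Cset 1 m"
      and e0: "f u = f v"
    obtain r x y z where u: "u = (r,x,y,z)" by (cases u) auto
    obtain r' x' y' z' where v: "v = (r',x',y',z')" by (cases v) auto
    have A: "(r, x, y, z) \<in> {0..<g} \<times> Cset 1 m" and B: "(r', x', y', z') \<in> {0..<g} \<times> Cset 1 m"
      and e: "f (r, x, y, z) = f (r', x', y', z')" using A0 B0 e0 u v by auto
    have rr: "r < g" "r' < g" using A B by auto
    have pos: "x \<ge> 1" "y \<ge> 1" "z \<ge> 1" "x' \<ge> 1" "y' \<ge> 1" "z' \<ge> 1" using A B by (auto simp: Cset_def)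
    have e1: "(x-1)*g + r = (x'-1)*g + r'" "(y-1)*g + r = (y'-1)*g + r'" "(z-1)*g + r = (z'-1)*g + r'"
      using e by (auto simp: f_def)
    have "r = r'" using divmod_uniq(2)[OF e1(1) rr] .
    moreover have "x = x'" using divmod_uniq(1)[OF e1(1) rr] pos by simp
    moreover have "y = y'" using divmod_uniq(1)[OF e1(2) rr] pos by simp
    moreover have "z = z'" using divmod_uniq(1)[OF e1(3) rr] pos by simp
    ultimately show "u = v" using u v by simp
  qed
  have img: "f ` ({0..<g} \<times> Cset 1 m) = Cset g n"
  proof (intro equalityI subsetI)
    fix w assume "w \<in> f ` ({0..<g} \<times> Cset 1 m)"
    then obtain r x y z where w: "w = f (r,x,y,z)" and r: "r < g" and xyz: "(x,y,z) \<in> Cset 1 m" by auto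
    have h: "1 \<le> x" "x < y" "y < z" "z \<le> m" "gcd (gcd (y - x) (z - y)) m = 1"
      using xyz by (auto simp: Cset_def)
    have le: "(z-1)*g + r + 1 \<le> n"
    proof -
      have "(z-1)*g \<le> (m-1)*g" using h by (intro mult_le_mono1) simp
      moreover have "(m-1)*g + g = n" using nm m0 by (simp add: algebra_simps)
      ultimately show ?thesis using r by linarith
    qed
    have lt1: "(x-1)*g < (y-1)*g" using h g0 by (intro mult_less_mono1) auto
    have lt2: "(y-1)*g < (z-1)*g" using h g0 by (intro mult_less_mono1) auto
    have le2: "(y-1)*g + r + 1 \<le> n" "(x-1)*g + r + 1 \<le> n" using le lt1 lt2 by linarith+
    have d1: "(y-1)*g + r + 1 - ((x-1)*g + r + 1) = (y-x)*g"
    proof -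
      have "(y-1)*g + r + 1 - ((x-1)*g + r + 1) = (y-1)*g - (x-1)*g" by simp
      also have "\<dots> = (y-1-(x-1))*g" by (simp only: diff_mult_distrib)
      also have "y-1-(x-1) = y-x" using h by simp
      finally show ?thesis .
    qed
    have d2: "(z-1)*g + r + 1 - ((y-1)*g + r + 1) = (z-y)*g"
    proof -
      have "(z-1)*g + r + 1 - ((y-1)*g + r + 1) = (z-1)*g - (y-1)*g" by simp
      also have "\<dots> = (z-1-(y-1))*g" by (simp only: diff_mult_distrib)
      also have "z-1-(y-1) = z-y" using h by simp
      finally show ?thesis .
    qed
    have gg: "gcd (gcd ((y-x)*g) ((z-y)*g)) (m*g) = g"
      using h by (simp add: gcd_mult_distrib_nat[symmetric] mult.commute)
    have gg': "gcd (gcd ((y-1)*g + r + 1 - ((x-1)*g + r + 1)) ((z-1)*g + r + 1 - ((y-1)*g + r + 1))) n = g"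
      unfolding d1 d2 nm using gg .
    show "w \<in> Cset g n" unfolding w f_def Cset_def mem_Collect_eq case_prod_conv atLeastAtMost_iff
      apply (intro conjI)
      using le le2 lt1 lt2 gg' by linarith+
  next
    fix w assume "w \<in> Cset g n"
    then obtain X Y Z where w: "w = (X,Y,Z)" and h: "1 \<le> X" "X < Y" "Y < Z" "Z \<le> n"
      "gcd (gcd (Y - X) (Z - Y)) n = g" by (auto simp: Cset_def)
    have gd: "g = gcd (gcd (Y - X) (Z - Y)) n" using h(5) by simp
    have "g dvd Y - X" unfolding gd by (rule dvd_trans[OF gcd_dvd1 gcd_dvd1])
    moreover have "g dvd Z - Y" unfolding gd by (rule dvd_trans[OF gcd_dvd1 gcd_dvd2])
    ultimately
    obtain a b where ab: "Y - X = g*a" "Z - Y = g*b" by (auto elim!: dvdE)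
    define q where "q = (X-1) div g"
    define r where "r = (X-1) mod g"
    have r: "r < g" using g0 r_def by simp
    have X: "X = q*g + r + 1" using h q_def r_def by simp
    have Y: "Y = (q+a)*g + r + 1" using X ab h by (simp add: algebra_simps)
    have Z: "Z = (q+a+b)*g + r + 1" using Y ab h by (simp add: algebra_simps)
    have a0: "a > 0" "b > 0" using ab h by (auto intro: Nat.gr0I)
    have qm: "q+a+b < m"
    proof (rule ccontr)
      assume "\<not> q+a+b < m"
      then have "m*g \<le> (q+a+b)*g" by (intro mult_le_mono1) simp
      then show False using Z h nm by linarith
    qed
    have e: "gcd (gcd (g*a) (g*b)) (g*m) = g * gcd (gcd a b) m" by (simp add: gcd_mult_distrib_nat)
    have "g * gcd (gcd a b) m = g"
      using h(5) unfolding ab nm e[symmetric] by (simp add: mult.commute)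
    then have gab: "gcd (gcd a b) m = 1" using g0 by simp
    have "(q+1, q+a+1, q+a+b+1) \<in> Cset 1 m"
      unfolding Cset_def using qm a0 gab by auto
    moreover have "w = f (r, q+1, q+a+1, q+a+b+1)"
      unfolding w f_def using X Y Z by simp
    ultimately show "w \<in> f ` ({0..<g} \<times> Cset 1 m)" using r by force
  qed
  have fin: "finite (Cset 1 m)" unfolding Cset_def
    by (rule finite_subset[of _ "{1..m} \<times> {1..m} \<times> {1..m}"]) auto
  have "card (Cset g n) = card ({0..<g} \<times> Cset 1 m)" using card_image[OF inj] img by simp
  also have "\<dots> = g * card (Cset 1 m)" by (simp add: card_cartesian_product)
  finally show ?thesis using m_def by simp
qed



definition Pset :: "nat \<Rightarrow> (nat \<times> nat) set" where
  "Pset n = {(x,y). x \<in> {1..n} \<and> y \<in> {1..n} \<and> x < y}"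
definition Tset :: "nat \<Rightarrow> (nat \<times> nat \<times> nat) set" where
  "Tset n = {(x,y,z). x \<in> {1..n} \<and> y \<in> {1..n} \<and> z \<in> {1..n} \<and> x < y \<and> y < z}"

lemma Pset_fin: "finite (Pset n)"
  unfolding Pset_def by (rule finite_subset[of _ "{1..n} \<times> {1..n}"]) auto
lemma Tset_fin: "finite (Tset n)"
  unfolding Tset_def by (rule finite_subset[of _ "{1..n} \<times> {1..n} \<times> {1..n}"]) auto

lemma card_Pset: "real (card (Pset n)) = real n * (real n - 1) / 2"
proof (induction n)
  case 0
  have "Pset 0 = {}" by (auto simp: Pset_def)
  then show ?case by simp
next
  case (Suc n)
  have e: "Pset (Suc n) = Pset n \<union> (\<lambda>x. (x, Suc n)) ` {1..n}"
    by (auto simp: Pset_def)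
  have d: "Pset n \<inter> (\<lambda>x. (x, Suc n)) ` {1..n} = {}" by (auto simp: Pset_def)
  have "card (Pset (Suc n)) = card (Pset n) + card ((\<lambda>x. (x, Suc n)) ` {1..n})"
    unfolding e by (rule card_Un_disjoint[OF Pset_fin _ d]) simp
  also have "card ((\<lambda>x. (x, Suc n)) ` {1..n}) = n" by (subst card_image) (auto simp: inj_on_def)
  finally show ?case using Suc by (simp add: field_simps)
qed

lemma card_Tset: "real (card (Tset n)) = real n * (real n - 1) * (real n - 2) / 6"
proof (induction n)
  case 0
  have "Tset 0 = {}" by (auto simp: Tset_def)
  then show ?case by simp
next
  case (Suc n)
  have e: "Tset (Suc n) = Tset n \<union> (\<lambda>(x,y). (x, y, Suc n)) ` Pset n"
  proof (intro equalityI subsetI)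
    fix w assume w: "w \<in> Tset (Suc n)"
    then obtain x y z where xyz: "w = (x,y,z)" "x \<in> {1..Suc n}" "y \<in> {1..Suc n}" "z \<in> {1..Suc n}" "x < y" "y < z"
      by (auto simp: Tset_def)
    show "w \<in> Tset n \<union> (\<lambda>(x,y). (x, y, Suc n)) ` Pset n"
    proof (cases "z = Suc n")
      case True
      then have "(x,y) \<in> Pset n" using xyz by (auto simp: Pset_def)
      then show ?thesis using xyz True by force
    next
      case False
      then show ?thesis using xyz by (auto simp: Tset_def)
    qed
  qed (auto simp: Tset_def Pset_def)
  have d: "Tset n \<inter> (\<lambda>(x,y). (x, y, Suc n)) ` Pset n = {}" by (auto simp: Tset_def Pset_def)
  have "card (Tset (Suc n)) = card (Tset n) + card ((\<lambda>(x,y). (x, y, Suc n)) ` Pset n)"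
    unfolding e by (rule card_Un_disjoint[OF Tset_fin _ d]) (simp add: Pset_fin)
  also have "card ((\<lambda>(x,y). (x, y, Suc n)) ` Pset n) = card (Pset n)"
    by (subst card_image) (auto simp: inj_on_def)
  finally show ?case using Suc card_Pset[of n] by (simp add: field_simps)
qed

lemma Cset_fin: "finite (Cset g n)"
  unfolding Cset_def by (rule finite_subset[of _ "{1..n} \<times> {1..n} \<times> {1..n}"]) auto

lemma Tset_sum:
  assumes "n > 0"
  shows "card (Tset n) = (\<Sum>g | g dvd n. card (Cset g n))"
proof -
  have "Tset n = (\<Union>g\<in>{g. g dvd n}. Cset g n)"
    by (auto simp: Tset_def Cset_def)
  moreover have "card (\<Union>g\<in>{g. g dvd n}. Cset g n) = (\<Sum>g | g dvd n. card (Cset g n))"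
  proof (rule card_UN_disjoint)
    show "finite {g. g dvd n}" using assms by simp
    show "\<forall>i\<in>{g. g dvd n}. finite (Cset i n)" by (simp add: Cset_fin)
    show "\<forall>i\<in>{g. g dvd n}. \<forall>j\<in>{g. g dvd n}. i \<noteq> j \<longrightarrow> Cset i n \<inter> Cset j n = {}"
      by (auto simp: Cset_def)
  qed
  ultimately show ?thesis by simp
qed


lemma F_sum:
  assumes "n > 0"
  shows "(\<Sum>d | d dvd n. real (n div d) * real (card (Cset 1 d))) = real n * (real n - 1) * (real n - 2) / 6"
proof -
  have "real n * (real n - 1) * (real n - 2) / 6 = real (card (Tset n))" using card_Tset by simp
  also have "\<dots> = (\<Sum>g | g dvd n. real (card (Cset g n)))" using Tset_sum[OF assms] by simp
  also have "\<dots> = (\<Sum>g | g dvd n. real g * real (card (Cset 1 (n div g))))"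
    using card_Cset[OF assms] by (intro sum.cong refl) simp
  also have "\<dots> = (\<Sum>d | d dvd n. real (n div d) * real (card (Cset 1 d)))"
    using assms by (intro sum.reindex_bij_witness[of _ "(div) n" "(div) n"]) (auto elim: dvdE)
  finally show ?thesis ..
qed

theorem mainTheorem5:
  fixes n :: nat
  assumes "n > 2"
  shows "real (card {(x::nat, y::nat, z::nat).
            x \<in> {1..n} \<and> y \<in> {1..n} \<and> z \<in> {1..n} \<and> x < y \<and> y < z \<and>
            gcd (gcd (y - x) (z - y)) n = 1})
         = real n / 6 * jordan_totient 2 n - real n / 2 * jordan_totient 1 n"
proof -
  have "real (card (Cset 1 n)) = Gf n"
  proof (rule dirichlet_uniq[where F = "\<lambda>d. real (card (Cset 1 d))" and G = Gf])
    fix m :: nat assume m0: "m > 0"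
    show "(\<Sum>d | d dvd m. real (m div d) * real (card (Cset 1 d))) = (\<Sum>d | d dvd m. real (m div d) * Gf d)"
      using F_sum[OF m0] Gf_sum[OF m0] by simp
  qed (use assms in simp)
  then show ?thesis using assms by (simp add: Cset_def Gf_def)
qed

end
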